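(* Let $T>0$, $M$ and $N$ be positive integers, $\tau=T/M$, $t_k=k\tau$ ($k=0,\dots,M$), $h=1/N$ and $x_r=rh$ ($r=0,\dots,N$). Let $u:\Omega=[0,1]\times[0,T]\to\mathbb{R}$ be such that $\partial_x^4 u$ is continuous on $\Omega$, and write $u_{k}(x)=u(x,t_{k})$. Let $1<\beta<2$ and $0\le k\le M-1$. For an integer $m\ge 1$ and $\eta>0$ put $c^{\eta}_m=\frac{(m-1)^{\eta}-m^{\eta}}{\eta}$, and set $\nu_h^{\beta}=\frac{h^{2-\beta}}{\Gamma(2-\beta)}$. For $1\le r\le N-1$ define the weights $w^{\beta}_{j,r}$, $j=0,\dots,r$, by \[ w^{\beta}_{j,r}=\tilde w^{\beta}_{j-1,0}-\tilde w^{\beta}_{j,1}, \] where $\tilde w^{\beta}_{-1,0}=0$, $\tilde w^{\beta}_{r,1}=0$, and for $\rho\in\{0,1\}$ and $m=1,\dots,r$, \[ \tilde w^{\beta}_{r-m,\rho}=c^{3-\beta}_{m}-(m-\rho)\,c^{2-\beta}_{m}. \] (Equivalently: $w^{\beta}_{0,r}=-\big(c^{3-\beta}_r-(r-1)c^{2-\beta}_r\big)$, $w^{\beta}_{r,r}=c^{3-\beta}_1-c^{2-\beta}_1$, and for $1\le j\le r-1$, $w^{\beta}_{j,r}=\big(c^{3-\beta}_{r-j+1}-(r-j+1)c^{2-\beta}_{r-j+1}\big)-\big(c^{3-\beta}_{r-j}-(r-j-1)c^{2-\beta}_{r-j}\big)$.) Then for $r=1,\dots,N-1$, \[ D_x^{\beta}u_{k+1}(x_r)=\nu_h^{\beta}\sum_{j=0}^{r}w^{\beta}_{j,r}\,u_{k+1}''(x_j)+R_h^{\beta}(r),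 \] where the remainder satisfies \[ \|R_h^{\beta}\|_{\infty}\le\frac{h^{2}\mathcal{M}_u}{8\,\Gamma(3-\beta)},\qquad \mathcal{M}_u=\sup_{(x,t)\in\Omega}\Big|\frac{\partial^4 u}{\partial x^4}(x,t)\Big|. \]
   Context: For $1<\beta<2$, the Caputo derivative in $x$ is $D_x^{\beta}f(x)=\frac{1}{\Gamma(2-\beta)}\int_0^{x}(x-s)^{1-\beta}f''(s)\,ds$ for $x>0$. Here $u_{k+1}''$ denotes the second derivative of $x\mapsto u(x,t_{k+1})$, and $\|R_h^\beta\|_\infty$ denotes the maximum of $|R_h^\beta(r)|$ over $r=1,\dots,N-1$. *)

theory Defs
  imports "HOL-Analysis.Analysis"
begin

text \<open>Caputo derivative of order beta (1 < beta < 2) at x > 0 of a function whose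
  second derivative is f2:  1/Gamma(2-beta) * integral_0^x (x-s)^(1-beta) f2(s) ds.\<close>
definition caputo :: "real \<Rightarrow> (real \<Rightarrow> real) \<Rightarrow> real \<Rightarrow> real" where
  "caputo \<beta> f2 x = (1 / Gamma (2 - \<beta>)) * integral {0..x} (\<lambda>s. (x - s) powr (1 - \<beta>) * f2 s)"

definition cco :: "real \<Rightarrow> nat \<Rightarrow> real" where
  "cco \<eta> m = ((real m - 1) powr \<eta> - real m powr \<eta>) / \<eta>"

text \<open>tilde w^beta_{i,rho} (for fixed r), with i = r - m, m = 1..r; zero outside 0 <= i < r
  (this encodes tilde w_{-1,0} = 0 and tilde w_{r,1} = 0).\<close>
definition wtil :: "real \<Rightarrow> nat \<Rightarrow> int \<Rightarrow> real \<Rightarrow> real" where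
  "wtil \<beta> r i \<rho> =
     (if 0 \<le> i \<and> i < int r then
        (let m = nat (int r - i) in cco (3 - \<beta>) m - (real m - \<rho>) * cco (2 - \<beta>) m)
      else 0)"

definition wgt :: "real \<Rightarrow> nat \<Rightarrow> nat \<Rightarrow> real" where
  "wgt \<beta> j r = wtil \<beta> r (int j - 1) 0 - wtil \<beta> r (int j) 1"

end

theory Submission
  imports Defs
begin


lemma interp_err:
  fixes f fd fdd :: "real \<Rightarrow> real"
  assumes ab: "a < b" and cf: "continuous_on {a..b} f" and cf1: "continuous_on {a..b} fd"
    and df: "\<And>x. a < x \<Longrightarrow> x < b \<Longrightarrow> (f has_real_derivative fd x) (at x)"
    and df1: "\<And>x. a < x \<Longrightarrow> x < b \<Longrightarrow> (fd has_real_derivative fdd x) (at x)"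
    and bd: "\<And>x. a < x \<Longrightarrow> x < b \<Longrightarrow> \<bar>fdd x\<bar> \<le> K"
    and s: "a \<le> s" "s \<le> b"
  shows "\<bar>f s - (f a * (b - s) + f b * (s - a)) / (b - a)\<bar> \<le> K * (b - a)^2 / 8"
proof (cases "s = a \<or> s = b")
  case True
  have "0 \<le> K" using bd[of "(a+b)/2"] ab by force
  moreover have "f s - (f a * (b - s) + f b * (s - a)) / (b - a) = 0"
    using True ab by (auto simp: field_simps)
  ultimately show ?thesis by simp
next
  case False
  with s have sa: "a < s" and sb: "s < b" by auto
  define q where "q = (f b - f a) / (b - a)"
  define L where "L y = f a + q * (y - a)" for y
  have Leq: "L y = (f a * (b - y) + f b * (y - a)) / (b - a)" for y
    using ab by (simp add: L_def q_def field_simps)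
  define C where "C = (f s - L s) / ((s - a) * (s - b))"
  define g where "g y = f y - L y - C * ((y - a) * (y - b))" for y
  define g1 where "g1 y = fd y - (f b - f a) / (b - a) - C * (2 * y - a - b)" for y
  have dg: "(g has_real_derivative g1 x) (at x)" if "a < x" "x < b" for x
    unfolding g_def g1_def L_def q_def[symmetric]
    by (auto intro!: derivative_eq_intros df[OF that] simp: algebra_simps)
  have dg1: "(g1 has_real_derivative (fdd x - 2 * C)) (at x)" if "a < x" "x < b" for x
    unfolding g1_def
    by (auto intro!: derivative_eq_intros df1[OF that] simp: algebra_simps)
  have cg: "continuous_on {a..b} g" unfolding g_def L_def
    by (intro continuous_intros cf)
  have cg1: "continuous_on {a..b} g1" unfolding g1_def
    by (intro continuous_intros cf1)
  have ga: "g a = 0" and gb: "g b = 0" using ab by (auto simp: g_def L_def q_def field_simps)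
  have gs: "g s = 0" using sa sb by (simp add: g_def C_def)
  obtain z1 where z1: "a < z1" "z1 < s" "(g has_real_derivative 0) (at z1)"
    using Rolle[of a s g] sa sb ga gs continuous_on_subset[OF cg, of "{a..s}"] dg
    by (auto simp: real_differentiable_def) (meson less_trans)
  obtain z2 where z2: "s < z2" "z2 < b" "(g has_real_derivative 0) (at z2)"
    using Rolle[of s b g] sa sb gb gs continuous_on_subset[OF cg, of "{s..b}"] dg
    by (auto simp: real_differentiable_def) (meson less_trans)
  have "g1 z1 = 0" using DERIV_unique[OF dg z1(3)] z1 sa sb by auto
  moreover have "g1 z2 = 0" using DERIV_unique[OF dg z2(3)] z2 sa sb by auto
  ultimately obtain z where z: "z1 < z" "z < z2" "(g1 has_real_derivative 0) (at z)"
    using Rolle[of z1 z2 g1] z1 z2 continuous_on_subset[OF cg1, of "{z1..z2}"] dg1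
    by (auto simp: real_differentiable_def) (meson less_trans)
  have "fdd z - 2 * C = 0" using DERIV_unique[OF dg1 z(3)] z z1 z2 by auto
  hence "\<bar>C\<bar> \<le> K / 2" using bd[of z] z z1 z2 by auto
  moreover have "f s - L s = C * ((s - a) * (s - b))" using sa sb by (simp add: C_def)
  moreover have "\<bar>(s - a) * (s - b)\<bar> \<le> (b - a)^2 / 4"
  proof -
    have "(b - a)^2 - 4 * ((s - a) * (b - s)) = (2 * s - a - b)^2" by (simp add: power2_eq_square algebra_simps)
    moreover have "(s - a) * (s - b) \<le> 0" using sa sb by (intro mult_nonneg_nonpos) auto
    moreover have "\<bar>(s - a) * (s - b)\<bar> = (s - a) * (b - s)" using calculation(2)
      by (simp add: algebra_simps)
    moreover have "0 \<le> (2 * s - a - b)^2" by simp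
    ultimately show ?thesis by linarith
  qed
  ultimately have "\<bar>f s - L s\<bar> \<le> K / 2 * ((b - a)^2 / 4)"
  proof -
    assume h: "\<bar>C\<bar> \<le> K / 2" "f s - L s = C * ((s - a) * (s - b))" "\<bar>(s - a) * (s - b)\<bar> \<le> (b - a)^2 / 4"
    have "\<bar>f s - L s\<bar> = \<bar>C\<bar> * \<bar>(s - a) * (s - b)\<bar>" using h(2) by (simp add: abs_mult)
    also have "\<dots> \<le> K / 2 * ((b - a)^2 / 4)" by (rule mult_mono) (use h in auto)
    finally show ?thesis .
  qed
  thus ?thesis by (simp add: Leq)
qed


lemma ftc_lin:
  fixes X a b p \<alpha> \<gamma> :: real
  assumes ab: "a \<le> b" and bX: "b \<le> X" and p: "0 < p"
  shows "((\<lambda>s. (X - s) powr (p - 1) * (\<alpha> + \<gamma> * s)) has_integral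
     ((\<gamma> * (X - b) powr (p + 1) / (p + 1) - (\<alpha> + \<gamma> * X) * (X - b) powr p / p)
     - (\<gamma> * (X - a) powr (p + 1) / (p + 1) - (\<alpha> + \<gamma> * X) * (X - a) powr p / p))) {a..b}"
proof -
  define G where "G s = \<gamma> * (X - s) powr (p + 1) / (p + 1) - (\<alpha> + \<gamma> * X) * (X - s) powr p / p" for s
  have "((\<lambda>s. (X - s) powr (p - 1) * (\<alpha> + \<gamma> * s)) has_integral (G b - G a)) {a..b}"
  proof (rule fundamental_theorem_of_calculus_interior[OF ab])
    show "continuous_on {a..b} G" unfolding G_def
      using bX p by (intro continuous_intros continuous_on_powr') auto
  next
    fix x assume x: "x \<in> {a<..<b}"
    hence xX: "0 < X - x" using bX by auto
    have d1: "((\<lambda>s. (X - s) powr (p + 1)) has_real_derivative (p + 1) * (X - x) powr (p + 1 - 1) * (-1)) (at x)"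
      using DERIV_fun_powr[of "\<lambda>s. X - s" "-1" x] xX by (auto intro!: derivative_eq_intros)
    have d2: "((\<lambda>s. (X - s) powr p) has_real_derivative p * (X - x) powr (p - 1) * (-1)) (at x)"
      using DERIV_fun_powr[of "\<lambda>s. X - s" "-1" x] xX by (auto intro!: derivative_eq_intros)
    have e: "(X - x) powr p = (X - x) powr (p - 1) * (X - x)"
    proof -
      have "(X - x) powr p = (X - x) powr ((p - 1) + 1)" by simp
      also have "\<dots> = (X - x) powr (p - 1) * (X - x) powr 1" by (rule powr_add)
      finally show ?thesis using xX by simp
    qed
    have "(G has_real_derivative (X - x) powr (p - 1) * (\<alpha> + \<gamma> * x)) (at x)"
    proof -
      have G': "G = (\<lambda>s. (\<gamma> / (p + 1)) * (X - s) powr (p + 1) - ((\<alpha> + \<gamma> * X) / p) * (X - s) powr p)"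
        by (auto simp: G_def)
      have "(G has_real_derivative (\<gamma> / (p + 1)) * ((p + 1) * (X - x) powr (p + 1 - 1) * (-1))
           - ((\<alpha> + \<gamma> * X) / p) * (p * (X - x) powr (p - 1) * (-1))) (at x)"
        unfolding G' by (intro DERIV_diff DERIV_cmult d1 d2)
      moreover have "(\<gamma> / (p + 1)) * ((p + 1) * (X - x) powr (p + 1 - 1) * (-1))
           - ((\<alpha> + \<gamma> * X) / p) * (p * (X - x) powr (p - 1) * (-1)) = (X - x) powr (p - 1) * (\<alpha> + \<gamma> * x)"
      proof -
        have "p + 1 - 1 = p" by simp
        have pp: "p + p * p \<noteq> 0" "p + 1 \<noteq> 0" using p by (smt (verit) mult_pos_pos)+
        then show ?thesis unfolding e using p
          by (simp only: \<open>p + 1 - 1 = p\<close> e) (simp add: pp field_simps)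
      qed
      ultimately show ?thesis by simp
    qed
    thus "(G has_vector_derivative (X - x) powr (p - 1) * (\<alpha> + \<gamma> * x)) (at x)"
      by (simp add: has_real_derivative_iff_has_vector_derivative)
  qed
  thus ?thesis by (simp add: G_def)
qed
lemma alg_aux:
  fixes A1 A2 B1 B2 H fa fb h p mm :: real
  assumes h: "0 < h"
  shows "(fb - fa) / h * (B1 * H * h) / (p + 1) - (fb * mm - fa * (mm - 1)) * (A1 * H) / p
       - ((fb - fa) / h * (B2 * H * h) / (p + 1) - (fb * mm - fa * (mm - 1)) * (A2 * H) / p)
       = H * (fb * ((B1 - B2) / (p + 1) - mm * ((A1 - A2) / p)) - fa * ((B1 - B2) / (p + 1) - (mm - 1) * ((A1 - A2) / p)))"
proof -
  have e1: "(fb - fa) / h * (B * H * h) = (fb - fa) * (B * H)" for B using h by simp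
  show ?thesis unfolding e1
    by (simp add: divide_inverse) (simp add: algebra_simps)
qed

lemma interval_integral:
  fixes X h p fa fb :: real and m :: nat
  assumes h: "0 < h" and p: "0 < p" and m: "1 \<le> m"
  shows "((\<lambda>s. (X - s) powr (p - 1) * ((fa * ((X - (real m - 1) * h) - s) + fb * (s - (X - real m * h))) / h))
     has_integral h powr p * (fb * (cco (p + 1) m - real m * cco p m) - fa * (cco (p + 1) m - (real m - 1) * cco p m)))
     {X - real m * h .. X - (real m - 1) * h}"
proof -
  define a where "a = X - real m * h"
  define b where "b = X - (real m - 1) * h"
  define \<alpha> where "\<alpha> = (fa * b - fb * a) / h"
  define \<gamma> where "\<gamma> = (fb - fa) / h"
  have ab: "a \<le> b" and bX: "b \<le> X" using h m by (auto simp: a_def b_def)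
  have L: "(fa * (b - s) + fb * (s - a)) / h = \<alpha> + \<gamma> * s" for s
    using h by (simp add: \<alpha>_def \<gamma>_def field_simps)
  have aX: "\<alpha> + \<gamma> * X = fb * real m - fa * (real m - 1)"
    using h by (simp add: \<alpha>_def \<gamma>_def a_def b_def field_simps)
  have m1: "0 \<le> real m - 1" using m by simp
  have Xb: "(X - b) powr q = (real m - 1) powr q * h powr q" for q
    using h m1 by (simp add: b_def powr_mult)
  have Xa: "(X - a) powr q = real m powr q * h powr q" for q
    using h by (simp add: a_def powr_mult)
  have hp: "h powr (p + 1) = h powr p * h" using h by (simp add: powr_add)
  have pp: "p + 1 \<noteq> 0" using p by simp
  note F = ftc_lin[OF ab bX p, of \<alpha> \<gamma>]
  have "((\<gamma> * (X - b) powr (p + 1) / (p + 1) - (\<alpha> + \<gamma> * X) * (X - b) powr p / p)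
     - (\<gamma> * (X - a) powr (p + 1) / (p + 1) - (\<alpha> + \<gamma> * X) * (X - a) powr p / p))
     = h powr p * (fb * (cco (p + 1) m - real m * cco p m) - fa * (cco (p + 1) m - (real m - 1) * cco p m))"
  proof -
    show ?thesis unfolding aX Xb Xa hp cco_def unfolding \<gamma>_def
      using alg_aux[OF h, of fb fa "(real m - 1) powr (p + 1)" "h powr p" p "real m" "(real m - 1) powr p" "real m powr (p+1)" "real m powr p"]
      by (simp only: mult.assoc)
  qed
  with F show ?thesis unfolding L a_def[symmetric] b_def[symmetric] by simp
qed


lemma sum_reindex:
  fixes F :: "nat \<Rightarrow> real"
  shows "(\<Sum>j = 0..r. wgt \<beta> j r * F j) = (\<Sum>j<r. F (Suc j) * wtil \<beta> r (int j) 0 - F j * wtil \<beta> r (int j) 1)"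
proof -
  have z1: "wtil \<beta> r (-1) 0 = 0" and z2: "wtil \<beta> r (int r) 1 = 0" by (simp_all add: wtil_def)
  have "(\<Sum>j = 0..r. wgt \<beta> j r * F j) = (\<Sum>j<Suc r. wtil \<beta> r (int j - 1) 0 * F j) - (\<Sum>j<Suc r. wtil \<beta> r (int j) 1 * F j)"
    by (simp add: wgt_def atLeast0AtMost lessThan_Suc_atMost[symmetric] sum_subtractf left_diff_distrib)
  also have "(\<Sum>j<Suc r. wtil \<beta> r (int j - 1) 0 * F j) = (\<Sum>j<r. wtil \<beta> r (int j) 0 * F (Suc j))"
    by (subst sum.lessThan_Suc_shift) (simp add: z1)
  also have "(\<Sum>j<Suc r. wtil \<beta> r (int j) 1 * F j) = (\<Sum>j<r. wtil \<beta> r (int j) 1 * F j)"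
    by (simp add: z2)
  finally show ?thesis by (simp add: sum_subtractf mult.commute)
qed


theorem theorem5p1:
  fixes T \<beta> :: real and M N k :: nat
    and u u1 u2 u3 u4 :: "real \<Rightarrow> real \<Rightarrow> real"
  assumes T_pos: "T > 0" and M_pos: "M \<ge> 1" and N_pos: "N \<ge> 1"
    and beta: "1 < \<beta>" "\<beta> < 2"
    and k: "k \<le> M - 1"
    and d1: "\<And>x t. x \<in> {0..1} \<Longrightarrow> t \<in> {0..T} \<Longrightarrow>
               ((\<lambda>y. u y t) has_real_derivative u1 x t) (at x within {0..1})"
    and d2: "\<And>x t. x \<in> {0..1} \<Longrightarrow> t \<in> {0..T} \<Longrightarrow>
               ((\<lambda>y. u1 y t) has_real_derivative u2 x t) (at x within {0..1})"
    and d3: "\<And>x t. x \<in> {0..1} \<Longrightarrow> t \<in> {0..T} \<Longrightarrow>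
               ((\<lambda>y. u2 y t) has_real_derivative u3 x t) (at x within {0..1})"
    and d4: "\<And>x t. x \<in> {0..1} \<Longrightarrow> t \<in> {0..T} \<Longrightarrow>
               ((\<lambda>y. u3 y t) has_real_derivative u4 x t) (at x within {0..1})"
    and cont4: "continuous_on ({0..1} \<times> {0..T}) (\<lambda>p. u4 (fst p) (snd p))"
  shows "\<forall>r \<in> {1..N-1}.
     \<bar>caputo \<beta> (\<lambda>x. u2 x (real (k+1) * (T / real M))) (real r * (1 / real N))
       - ((1 / real N) powr (2 - \<beta>) / Gamma (2 - \<beta>)) *
         (\<Sum>j = 0..r. wgt \<beta> j r * u2 (real j * (1 / real N)) (real (k+1) * (T / real M)))\<bar>
     \<le> (1 / real N)^2 * (SUP p \<in> {0..1} \<times> {0..T}. \<bar>u4 (fst p) (snd p)\<bar>) / (8 * Gamma (3 - \<beta>))"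
  proof
  fix r assume r: "r \<in> {1..N-1}"
  define h where "h = 1 / real N"
  define X where "X = real r * h"
  define t where "t = real (k+1) * (T / real M)"
  define p where "p = 2 - \<beta>"
  define f where "f x = u2 x t" for x
  have f_eq: "f = (\<lambda>y. u2 y t)" by (simp add: fun_eq_iff f_def)
  define w where "w s = (X - s) powr (1 - \<beta>)" for s
  have w_eq: "w = (\<lambda>s. (X - s) powr (1 - \<beta>))" by (simp add: fun_eq_iff w_def)
  define Mu where "Mu = (SUP q \<in> {0..1} \<times> {0..T}. \<bar>u4 (fst q) (snd q)\<bar>)"
  define C where "C = Mu * h^2 / 8"
  have hpos: "0 < h" using N_pos by (simp add: h_def)
  have r1: "1 \<le> r" "r \<le> N - 1" using r by auto
  have X1: "X \<le> 1" "0 < X"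
  proof -
    have "real r \<le> real N" using r1 by simp
    thus "X \<le> 1" using N_pos by (simp add: X_def h_def field_simps)
    show "0 < X" using r1 hpos by (simp add: X_def)
  qed
  have tT: "t \<in> {0..T}"
  proof -
    have "real (k+1) \<le> real M" using k M_pos by linarith
    hence "real (k+1) * (T / real M) \<le> real M * (T / real M)"
      using T_pos by (intro mult_right_mono) auto
    thus ?thesis using T_pos M_pos by (auto simp: t_def)
  qed
  have p: "0 < p" "p - 1 = 1 - \<beta>" "p + 1 = 3 - \<beta>" using beta by (auto simp: p_def)
  have Mu: "\<bar>u4 x t\<bar> \<le> Mu" if "x \<in> {0..1}" for x
  proof -
    have cc: "continuous_on ({0..1} \<times> {0..T}) (\<lambda>q. \<bar>u4 (fst q) (snd q)\<bar>)"
      by (intro continuous_intros cont4)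
    have "compact ((\<lambda>q. \<bar>u4 (fst q) (snd q)\<bar>) ` ({0..1} \<times> {0..T}))"
      by (rule compact_continuous_image[OF cc]) (intro compact_Times compact_Icc)
    hence bdd: "bdd_above ((\<lambda>q. \<bar>u4 (fst q) (snd q)\<bar>) ` ({0..1} \<times> {0..T}))"
      by (intro bounded_imp_bdd_above compact_imp_bounded)
    have "(x, t) \<in> {0..1} \<times> {0..T}" using that tT by auto
    from cSUP_upper[OF this bdd] show ?thesis by (simp add: Mu_def)
  qed
  have Mu0: "0 \<le> Mu" using Mu[of 0] by force
  have C0: "0 \<le> C" using Mu0 by (simp add: C_def)
  have cont_f: "continuous_on {0..1} f"
    unfolding continuous_on_eq_continuous_within f_def
    using d3 tT by (blast intro: DERIV_continuous)
  have cont_u3: "continuous_on {0..1} (\<lambda>x. u3 x t)"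
    unfolding continuous_on_eq_continuous_within
    using d4 tT by (blast intro: DERIV_continuous)
  have df: "(f has_real_derivative u3 x t) (at x)" if "0 < x" "x < 1" for x
    using d3[of x t] that tT at_within_Icc_at[of 0 x 1] by (simp add: f_eq)
  have du3: "((\<lambda>x. u3 x t) has_real_derivative u4 x t) (at x)" if "0 < x" "x < 1" for x
    using d4[of x t] that tT at_within_Icc_at[of 0 x 1] by simp
  have interp: "\<bar>f s - (f a * (b - s) + f b * (s - a)) / (b - a)\<bar> \<le> Mu * (b - a)^2 / 8"
    if "0 \<le> a" "a < b" "b \<le> 1" "a \<le> s" "s \<le> b" for a b s
    using that
    by (intro interp_err[where fd="\<lambda>x. u3 x t" and fdd="\<lambda>x. u4 x t"]
          continuous_on_subset[OF cont_f] continuous_on_subset[OF cont_u3] df du3 Mu) auto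
  define Q where "Q j = h powr p * (f (real (Suc j) * h) * wtil \<beta> r (int j) 0 - f (real j * h) * wtil \<beta> r (int j) 1)" for j
  define L where "L j s = (f (real j * h) * (real (Suc j) * h - s) + f (real (Suc j) * h) * (s - real j * h)) / h" for j s
  define E where "E j = integral {real j * h .. real (Suc j) * h} (\<lambda>s. (f s - L j s) * w s)" for j
  define W where "W j = (X - real j * h) powr p / p - (X - real (Suc j) * h) powr p / p" for j
  have step: "((\<lambda>s. w s * f s) has_integral (Q j + E j)) {real j * h .. real (Suc j) * h}
      \<and> (w has_integral W j) {real j * h .. real (Suc j) * h} \<and> \<bar>E j\<bar> \<le> C * W j" if j: "j < r" for j
  proof -
    define m where "m = r - j"
    define a where "a = real j * h"
    define b where "b = real (Suc j) * h"
    have m1: "1 \<le> m" using j by (simp add: m_def)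
    have rm: "real m = real r - real j" using j by (simp add: m_def)
    have ea: "X - real m * h = a" by (simp add: X_def a_def rm algebra_simps)
    have eb: "X - (real m - 1) * h = b" by (simp add: X_def b_def rm algebra_simps)
    have ab: "a < b" "b - a = h" using hpos by (simp_all add: a_def b_def algebra_simps)
    have a0: "0 \<le> a" using hpos by (simp add: a_def)
    have b1: "b \<le> X" using j hpos by (simp add: b_def X_def mult_right_mono)
    have Lj: "L j s = (f a * (b - s) + f b * (s - a)) / h" for s by (simp add: L_def a_def b_def)
    have wnn: "0 \<le> w s" for s by (simp add: w_def)
    have wt0: "wtil \<beta> r (int j) 0 = cco (p + 1) m - real m * cco p m"
      using j by (simp add: wtil_def p m_def p_def of_nat_diff Let_def nat_diff_distrib)
    have wt1: "wtil \<beta> r (int j) 1 = cco (p + 1) m - (real m - 1) * cco p m"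
      using j by (simp add: wtil_def p m_def p_def of_nat_diff Let_def nat_diff_distrib)
    have I1: "((\<lambda>s. w s * L j s) has_integral Q j) {a..b}"
      using interval_integral[OF hpos p(1) m1, of X "f a" "f b"]
      unfolding ea eb p(2) by (simp add: w_def L_def Q_def wt0 wt1 a_def b_def)
    have I2: "(w has_integral W j) {a..b}"
      using ftc_lin[OF less_imp_le[OF ab(1)] b1 p(1), of 1 0]
      unfolding p(2) by (simp add: w_eq W_def a_def b_def)
    have ce: "continuous_on {a..b} (\<lambda>s. f s - L j s)"
      unfolding L_def using a0 ab b1 X1
      by (intro continuous_intros continuous_on_subset[OF cont_f]) auto
    have wabs: "w absolutely_integrable_on {a..b}"
      using I2 wnn by (intro nonnegative_absolutely_integrable_1) auto
    have "(\<lambda>s. (f s - L j s) * w s) absolutely_integrable_on {a..b}"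
      by (rule absolutely_integrable_bounded_measurable_product_real[OF
            continuous_imp_measurable_on_sets_lebesgue[OF ce] _ _ wabs])
         (auto intro: compact_imp_bounded compact_continuous_image[OF ce])
    hence intE: "(\<lambda>s. (f s - L j s) * w s) integrable_on {a..b}"
      by (simp add: absolutely_integrable_on_def)
    have IE: "((\<lambda>s. (f s - L j s) * w s) has_integral E j) {a..b}"
      using intE by (simp add: E_def a_def b_def has_integral_integral)
    have "((\<lambda>s. w s * L j s + (f s - L j s) * w s) has_integral (Q j + E j)) {a..b}"
      by (rule has_integral_add[OF I1 IE])
    moreover have "(\<lambda>s. w s * L j s + (f s - L j s) * w s) = (\<lambda>s. w s * f s)"
      by (auto simp: algebra_simps)
    ultimately have J1: "((\<lambda>s. w s * f s) has_integral (Q j + E j)) {a..b}" by simp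
    have "norm (integral {a..b} (\<lambda>s. (f s - L j s) * w s)) \<le> integral {a..b} (\<lambda>s. C * w s)"
    proof (rule integral_norm_bound_integral[OF intE])
      show "(\<lambda>s. C * w s) integrable_on {a..b}" using has_integral_mult_right[OF I2, of C] by (auto simp: integrable_on_def)
    next
      fix s assume s: "s \<in> {a..b}"
      have "\<bar>f s - L j s\<bar> \<le> C"
        using interp[of a b s] a0 ab b1 X1 s
        unfolding Lj by (simp add: C_def)
      hence "\<bar>f s - L j s\<bar> * w s \<le> C * w s" by (intro mult_right_mono wnn)
      thus "norm ((f s - L j s) * w s) \<le> C * w s" by (simp add: abs_mult wnn)
    qed
    also have "integral {a..b} (\<lambda>s. C * w s) = C * W j"
      using has_integral_mult_right[OF I2, of C] by (rule integral_unique)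
    finally have "\<bar>E j\<bar> \<le> C * W j" by (simp add: E_def a_def b_def)
    with J1 I2 show ?thesis by (simp add: a_def b_def)
  qed
  have sum: "((\<lambda>s. w s * f s) has_integral (\<Sum>j<n. Q j + E j)) {0 .. real n * h}
      \<and> (w has_integral (\<Sum>j<n. W j)) {0 .. real n * h}" if "n \<le> r" for n
    using that
  proof (induction n)
    case 0
    then show ?case by (simp add: has_integral_refl(2))
  next
    case (Suc n)
    hence IH: "((\<lambda>s. w s * f s) has_integral (\<Sum>j<n. Q j + E j)) {0 .. real n * h}"
        "(w has_integral (\<Sum>j<n. W j)) {0 .. real n * h}" by auto
    have st: "((\<lambda>s. w s * f s) has_integral (Q n + E n)) {real n * h .. real (Suc n) * h}"
        "(w has_integral W n) {real n * h .. real (Suc n) * h}" using step[of n] Suc.prems by auto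
    have le: "0 \<le> real n * h" "real n * h \<le> real (Suc n) * h" using hpos by auto
    show ?case using has_integral_combine[OF le IH(1) st(1)] has_integral_combine[OF le IH(2) st(2)]
      by simp
  qed
  from sum[of r] have S1: "((\<lambda>s. w s * f s) has_integral (\<Sum>j<r. Q j + E j)) {0 .. X}"
      and S2: "(w has_integral (\<Sum>j<r. W j)) {0 .. X}" by (auto simp: X_def)
  have "(w has_integral X powr p / p) {0..X}"
    using ftc_lin[of 0 X X p 1 0] X1 p unfolding p(2) by (simp add: w_eq)
  hence SW: "(\<Sum>j<r. W j) = X powr p / p" using S2 by (rule has_integral_unique[symmetric])
  have Ebd: "\<bar>\<Sum>j<r. E j\<bar> \<le> C * (X powr p / p)"
  proof -
    have "\<bar>\<Sum>j<r. E j\<bar> \<le> (\<Sum>j<r. \<bar>E j\<bar>)" by (rule sum_abs)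
    also have "\<dots> \<le> (\<Sum>j<r. C * W j)" using step by (intro sum_mono) auto
    finally show ?thesis by (simp add: sum_distrib_left[symmetric] SW)
  qed
  have cap: "caputo \<beta> f X = (1 / Gamma p) * (\<Sum>j<r. Q j + E j)"
    unfolding caputo_def using integral_unique[OF S1] by (simp add: w_def p_def)
  have QS: "(\<Sum>j<r. Q j) = h powr p * (\<Sum>j = 0..r. wgt \<beta> j r * f (real j * h))"
    by (simp add: Q_def sum_reindex sum_distrib_left)
  have Gp: "0 < Gamma p" using p by (simp add: Gamma_real_pos)
  have G3: "Gamma (3 - \<beta>) = p * Gamma p"
  proof -
    have "p \<notin> \<int>\<^sub>\<le>\<^sub>0" using p by (auto elim!: nonpos_Ints_cases)
    from Gamma_plus1[OF this] show ?thesis by (simp add: p(3))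
  qed
  have Xp: "X powr p \<le> 1" using X1 p by (intro powr_le1) auto
  have "\<bar>caputo \<beta> f X - (h powr p / Gamma p) * (\<Sum>j = 0..r. wgt \<beta> j r * f (real j * h))\<bar>
        = \<bar>\<Sum>j<r. E j\<bar> / Gamma p"
  proof -
    have "caputo \<beta> f X - (h powr p / Gamma p) * (\<Sum>j = 0..r. wgt \<beta> j r * f (real j * h))
        = ((\<Sum>j<r. Q j) + (\<Sum>j<r. E j)) / Gamma p - (\<Sum>j<r. Q j) / Gamma p"
      unfolding cap QS sum.distrib by simp
    also have "\<dots> = (\<Sum>j<r. E j) / Gamma p" by (simp add: diff_divide_distrib add_divide_distrib)
    finally show ?thesis using Gp by simp
  qed
  also have "\<dots> \<le> C * (X powr p / p) / Gamma p" using Gp Ebd by (intro divide_right_mono) auto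
  also have "\<dots> \<le> C * (1 / p) / Gamma p" using Gp p C0 Xp
    by (intro divide_right_mono mult_left_mono) (auto simp: divide_right_mono)
  also have "\<dots> = h^2 * Mu / (8 * Gamma (3 - \<beta>))" using G3 p Gp by (simp add: C_def field_simps)
  finally show "\<bar>caputo \<beta> (\<lambda>x. u2 x (real (k+1) * (T / real M))) (real r * (1 / real N))
       - ((1 / real N) powr (2 - \<beta>) / Gamma (2 - \<beta>)) *
         (\<Sum>j = 0..r. wgt \<beta> j r * u2 (real j * (1 / real N)) (real (k+1) * (T / real M)))\<bar>
     \<le> (1 / real N)^2 * (SUP p \<in> {0..1} \<times> {0..T}. \<bar>u4 (fst p) (snd p)\<bar>) / (8 * Gamma (3 - \<beta>))"
    unfolding h_def[symmetric] t_def[symmetric] X_def[symmetric] p_def[symmetric] Mu_def[symmetric]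
    by (simp add: f_def[abs_def])
qed


end
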